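(* Let $f:X\to\mathcal G$ be convex and $x_0\in\operatorname{dom} f$. If $x_0$ solves the set-valued Minty inequality, i.e. for all $x\in X$ with $f(x)\ne f(x_0)$ one has $f'(x,x_0-x)\not\subseteq 0^+f(x)$, then it solves the scalarized Minty inequality, i.e. for all $x\in X$ with $f(x)\neq f(x_0)$ there exists $z^*\in C^-\setminus\{0\}$ with $\varphi_{f,z^*}(x)\ne-\infty$ and $\varphi'_{f,z^*}(x,x_0-x)<0$. If additionally the strong regularity condition $\varphi_{f'(x,\cdot),z^*}(u)=\varphi'_{f,z^*}(x,u)$ holds for all $z^*\in C^-\setminus\{0\}$ and all $x,u\in X$, then $x_0$ solves the set-valued Minty inequality if and only if it solves the scalarized one.
   Context: $X$ real linear space, $Z$ real locally convex Hausdorff space with dual $Z^*$, $C\subseteq Z$ closed convex cone, $0\in C$, $C^-=\{z^*:z^*(c)\le0\ \forall c\in C\}$, $C^-\setminus\{0\}\ne\emptyset$. $\mathcal G=\{A\subseteq Z:A=\operatorname{cl}\operatorname{co}(A+C)\}$; $A\oplus B=\operatorname{cl}\{a+b\}$, $tA=\{ta\}$ ($t>0$), $A\ominus B=\{z:B+\{z\}\subseteq A\}$; $0^+A=\{z:A+\{z\}\subseteq A\}$ for $A\ne\emptyset$, $0^+\emptyset=\emptyset$. $f$ convex: $f(tx_1+(1-t)x_2)\supseteq tf(x_1)\oplus(1-t)f(x_2)$; $\operatorname{dom}f=\{x:f(x)\ne\emptyset\}$. $f'(x,u)=\bigcap_{t_0>0}\operatorname{cl}\operatorname{co}\bigcup_{0<t<t_0}\frac1t(f(x+tu)\ominus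 f(x))$. On $\overline{\mathbb R}$: inf-addition $\dot+$ ($(-\infty)\dot+(+\infty)=+\infty$), $r\ominus s=\inf\{t\in\mathbb R:r\le s\dot+t\}$ ($\inf\emptyset=+\infty$). $\varphi_{f,z^*}(x)=\inf\{-z^*(z):z\in f(x)\}$ ($+\infty$ if $f(x)=\emptyset$), $\varphi_{f'(x,\cdot),z^*}(u)=\inf\{-z^*(z):z\in f'(x,u)\}$, $\varphi'_{f,z^*}(x,u)=\inf_{t>0}\frac1t(\varphi_{f,z^*}(x+tu)\ominus\varphi_{f,z^*}(x))$. *)

theory Defs
  imports "HOL-Analysis.Analysis" "HOL-Library.Extended_Real"
begin

text \<open>Z is a real locally convex Hausdorff topological vector space.
  Hausdorffness comes from the type class t2_space; the remaining axioms are stated here.\<close>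
definition lc_tvs :: "'z::{real_vector,t2_space} itself \<Rightarrow> bool" where
  "lc_tvs _ \<longleftrightarrow>
     continuous_on UNIV (\<lambda>p::'z \<times> 'z. fst p + snd p) \<and>
     continuous_on UNIV (\<lambda>p::real \<times> 'z. fst p *\<^sub>R snd p) \<and>
     (\<forall>U::'z set. open U \<and> 0 \<in> U \<longrightarrow> (\<exists>V. open V \<and> convex V \<and> 0 \<in> V \<and> V \<subseteq> U))"

definition topdual :: "('z::{real_vector,topological_space} \<Rightarrow> real) set" where
  "topdual = {zs. linear zs \<and> continuous_on UNIV zs}"

definition negdual :: "'z::{real_vector,topological_space} set \<Rightarrow> ('z \<Rightarrow> real) set" where
  "negdual C = {zs \<in> topdual. \<forall>c\<in>C. zs c \<le> 0}"

definition msum :: "'z::real_vector set \<Rightarrow> 'z set \<Rightarrow> 'z set" where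
  "msum A B = {a + b | a b. a \<in> A \<and> b \<in> B}"

definition GG :: "'z::{real_vector,topological_space} set \<Rightarrow> 'z set set" where
  "GG C = {A. A = closure (convex hull (msum A C))}"

definition oplus :: "'z::{real_vector,topological_space} set \<Rightarrow> 'z set \<Rightarrow> 'z set" where
  "oplus A B = closure (msum A B)"

definition sscale :: "real \<Rightarrow> 'z::real_vector set \<Rightarrow> 'z set" where
  "sscale t A = (\<lambda>a. t *\<^sub>R a) ` A"

definition ominus :: "'z::real_vector set \<Rightarrow> 'z set \<Rightarrow> 'z set" where
  "ominus A B = {z. msum B {z} \<subseteq> A}"

definition recc :: "'z::real_vector set \<Rightarrow> 'z set" where
  "recc A = (if A = {} then {} else {z. msum A {z} \<subseteq> A})"

definition setconvex :: "'z::{real_vector,topological_space} set \<Rightarrow> ('x::real_vector \<Rightarrow> 'z set) \<Rightarrow> bool" where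
  "setconvex C f \<longleftrightarrow> (\<forall>x. f x \<in> GG C) \<and>
     (\<forall>x1 x2 t. 0 < t \<and> t < 1 \<longrightarrow>
        oplus (sscale t (f x1)) (sscale (1 - t) (f x2)) \<subseteq> f (t *\<^sub>R x1 + (1 - t) *\<^sub>R x2))"

definition sdom :: "('x \<Rightarrow> 'z set) \<Rightarrow> 'x set" where
  "sdom f = {x. f x \<noteq> {}}"

definition sdir :: "('x::real_vector \<Rightarrow> 'z::{real_vector,topological_space} set) \<Rightarrow> 'x \<Rightarrow> 'x \<Rightarrow> 'z set" where
  "sdir f x u = (\<Inter>t0\<in>{t0::real. 0 < t0}.
      closure (convex hull (\<Union>t\<in>{t. 0 < t \<and> t < t0}.
          sscale (1 / t) (ominus (f (x + t *\<^sub>R u)) (f x)))))"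

definition infadd :: "ereal \<Rightarrow> ereal \<Rightarrow> ereal" where
  "infadd r s = (if r = \<infinity> \<or> s = \<infinity> then \<infinity>
                 else if r = -\<infinity> \<or> s = -\<infinity> then -\<infinity>
                 else ereal (real_of_ereal r + real_of_ereal s))"

definition eminus :: "ereal \<Rightarrow> ereal \<Rightarrow> ereal" where
  "eminus r s = Inf (ereal ` {t::real. r \<le> infadd s (ereal t)})"

definition phi :: "('z \<Rightarrow> real) \<Rightarrow> 'z set \<Rightarrow> ereal" where
  "phi zs A = Inf ((\<lambda>z. ereal (- zs z)) ` A)"

definition phidir :: "('x::real_vector \<Rightarrow> 'z set) \<Rightarrow> ('z \<Rightarrow> real) \<Rightarrow> 'x \<Rightarrow> 'x \<Rightarrow> ereal" where
  "phidir f zs x u = (INF t\<in>{t::real. 0 < t}.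
      ereal (1 / t) * eminus (phi zs (f (x + t *\<^sub>R u))) (phi zs (f x)))"

end

theory Submission
  imports Defs "HOL-Analysis.Analysis"
begin

definition sublin :: "('a::real_vector \<Rightarrow> real) \<Rightarrow> bool" where
  "sublin q \<longleftrightarrow> (\<forall>x y. q (x+y) \<le> q x + q y) \<and> (\<forall>c x. c \<ge> 0 \<longrightarrow> q (c *\<^sub>R x) = c * q x)"

lemma sublin_0: "sublin q \<Longrightarrow> q 0 = 0"
  unfolding sublin_def by (metis mult_zero_left order_refl scaleR_zero_left)

lemma sublin_add: "sublin q \<Longrightarrow> q (x+y) \<le> q x + q y"
  unfolding sublin_def by blast

lemma sublin_scale: "sublin q \<Longrightarrow> c \<ge> 0 \<Longrightarrow> q (c *\<^sub>R x) = c * q x"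
  unfolding sublin_def by blast

lemma sublin_lower: "sublin q \<Longrightarrow> - q (-x) \<le> q x"
  using sublin_add[of q x "-x"] sublin_0[of q] by simp

definition shiftf :: "('a::real_vector \<Rightarrow> real) \<Rightarrow> 'a \<Rightarrow> 'a \<Rightarrow> real" where
  "shiftf q a x = Inf ((\<lambda>t. q (x + t *\<^sub>R a) - t * q a) ` {0..})"

lemma shiftf_bdd:
  assumes "sublin q"
  shows "bdd_below ((\<lambda>t. q (x + t *\<^sub>R a) - t * q a) ` {0..})"
proof (rule bdd_belowI2[where m="- q (-x)"])
  fix t :: real assume "t \<in> {0..}"
  then have "t * q a = q (t *\<^sub>R a)" using sublin_scale[OF assms] by simp
  also have "\<dots> \<le> q (x + t *\<^sub>R a) + q (-x)" using sublin_add[OF assms, of "x + t *\<^sub>R a" "-x"] by simp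
  finally show "- q (-x) \<le> q (x + t *\<^sub>R a) - t * q a" by simp
qed

lemma shiftf_le: "sublin q \<Longrightarrow> t \<ge> 0 \<Longrightarrow> shiftf q a x \<le> q (x + t *\<^sub>R a) - t * q a"
  unfolding shiftf_def by (rule cInf_lower) (auto intro: shiftf_bdd)

lemma shiftf_ge: "(\<And>t. t \<ge> 0 \<Longrightarrow> B \<le> q (x + t *\<^sub>R a) - t * q a) \<Longrightarrow> B \<le> shiftf q a x"
  unfolding shiftf_def by (rule cInf_greatest) auto

lemma shiftf_below: "sublin q \<Longrightarrow> shiftf q a x \<le> q x"
  using shiftf_le[of q 0 a x] by simp

lemma shiftf_neg: "sublin q \<Longrightarrow> shiftf q a (-a) \<le> - q a"
  using shiftf_le[of q 1 a "-a"] sublin_0[of q] by simp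

lemma shiftf_lowb: "sublin q \<Longrightarrow> - q (-x) \<le> shiftf q a x"
proof (rule shiftf_ge)
  fix t :: real assume q: "sublin q" and t: "0 \<le> t"
  then have "t * q a = q (t *\<^sub>R a)" using sublin_scale[OF q] by simp
  also have "\<dots> \<le> q (x + t *\<^sub>R a) + q (-x)" using sublin_add[OF q, of "x + t *\<^sub>R a" "-x"] by simp
  finally show "- q (-x) \<le> q (x + t *\<^sub>R a) - t * q a" by simp
qed

lemma shiftf_sublin:
  assumes q: "sublin q"
  shows "sublin (shiftf q a)"
  unfolding sublin_def
proof (intro conjI allI impI)
  fix x y
  have "shiftf q a (x+y) - (q (y + t *\<^sub>R a) - t * q a) \<le> shiftf q a x" if t: "t \<ge> 0" for t
  proof (rule shiftf_ge)
    fix s :: real assume s: "s \<ge> 0"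
    have "shiftf q a (x+y) \<le> q (x + y + (s+t) *\<^sub>R a) - (s+t) * q a"
      using shiftf_le[OF q, of "s+t"] s t by simp
    also have "q (x + y + (s+t) *\<^sub>R a) \<le> q (x + s *\<^sub>R a) + q (y + t *\<^sub>R a)"
      using sublin_add[OF q, of "x + s *\<^sub>R a" "y + t *\<^sub>R a"]
      by (simp add: algebra_simps)
    finally show "shiftf q a (x + y) - (q (y + t *\<^sub>R a) - t * q a) \<le> q (x + s *\<^sub>R a) - s * q a"
      by (simp add: algebra_simps)
  qed
  then have "shiftf q a (x+y) - shiftf q a x \<le> shiftf q a y"
    by (intro shiftf_ge) (smt (verit))
  then show "shiftf q a (x + y) \<le> shiftf q a x + shiftf q a y" by simp
next
  fix c :: real and x assume c: "0 \<le> c"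
  show "shiftf q a (c *\<^sub>R x) = c * shiftf q a x"
  proof (cases "c = 0")
    case True
    have "shiftf q a 0 \<le> 0" using shiftf_below[OF q] sublin_0[OF q] by metis
    moreover have "shiftf q a 0 \<ge> 0" using shiftf_lowb[OF q, of 0] sublin_0[OF q] by simp
    ultimately show ?thesis using True by simp
  next
    case False
    then have c: "c > 0" using c by simp
    have "shiftf q a (c *\<^sub>R x) \<le> c * shiftf q a x"
    proof -
      have "shiftf q a (c *\<^sub>R x) / c \<le> shiftf q a x"
      proof (rule shiftf_ge)
        fix t :: real assume t: "t \<ge> 0"
        have "shiftf q a (c *\<^sub>R x) \<le> q (c *\<^sub>R x + (c*t) *\<^sub>R a) - (c*t) * q a"
          using shiftf_le[OF q, of "c*t"] t c by simp
        also have "q (c *\<^sub>R x + (c*t) *\<^sub>R a) = c * q (x + t *\<^sub>R a)"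
          using sublin_scale[OF q, of c "x + t *\<^sub>R a"] c by (simp add: algebra_simps)
        finally show "shiftf q a (c *\<^sub>R x) / c \<le> q (x + t *\<^sub>R a) - t * q a"
          using c by (simp add: field_simps)
      qed
      then show ?thesis using c by (simp add: field_simps)
    qed
    moreover have "c * shiftf q a x \<le> shiftf q a (c *\<^sub>R x)"
    proof (rule shiftf_ge)
      fix t :: real assume t: "t \<ge> 0"
      have "shiftf q a x \<le> q (x + (t/c) *\<^sub>R a) - (t/c) * q a"
        using shiftf_le[OF q, of "t/c"] t c by simp
      also have "c * q (x + (t/c) *\<^sub>R a) = q (c *\<^sub>R x + t *\<^sub>R a)"
        using sublin_scale[OF q, of c "x + (t/c) *\<^sub>R a"] c by (simp add: algebra_simps)
      ultimately have "c * shiftf q a x \<le> c * (q (x + (t/c) *\<^sub>R a) - (t/c) * q a)"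
        using c by (simp add: mult_left_mono)
      also have "\<dots> = q (c *\<^sub>R x + t *\<^sub>R a) - t * q a"
        using c \<open>c * q (x + (t/c) *\<^sub>R a) = q (c *\<^sub>R x + t *\<^sub>R a)\<close>
        by (simp add: right_diff_distrib)
      finally show "c * shiftf q a x \<le> q (c *\<^sub>R x + t *\<^sub>R a) - t * q a" .
    qed
    ultimately show ?thesis by simp
  qed
qed

definition sepi :: "('a \<Rightarrow> real) \<Rightarrow> ('a \<times> real) set" where
  "sepi r = {(x,s). r x < s}"

lemma sepi_subset_le: "sepi r1 \<subseteq> sepi r2 \<Longrightarrow> r2 x \<le> r1 x"
proof (rule ccontr)
  assume "sepi r1 \<subseteq> sepi r2" "\<not> r2 x \<le> r1 x"
  then have "(x, (r1 x + r2 x)/2) \<in> sepi r1" "(x, (r1 x + r2 x)/2) \<notin> sepi r2"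
    by (auto simp: sepi_def)
  then show False using \<open>sepi r1 \<subseteq> sepi r2\<close> by blast
qed

lemma le_sepi_subset: "(\<And>x. r2 x \<le> r1 x) \<Longrightarrow> sepi r1 \<subseteq> sepi r2"
  by (auto simp: sepi_def intro: le_less_trans)

lemma sepi_inj: "sepi r1 = sepi r2 \<Longrightarrow> r1 = r2"
  by (rule ext) (metis order_antisym order_refl sepi_subset_le)

lemma less_iff_eq: "(\<And>s::real. a < s \<longleftrightarrow> b < s) \<Longrightarrow> a = b"
  by (metis less_irrefl linorder_neqE_linordered_idom)

lemma exists_linear_below:
  fixes q :: "'a::real_vector \<Rightarrow> real"
  assumes q: "sublin q"
  shows "\<exists>L. linear L \<and> (\<forall>x. L x \<le> q x)"
proof -
  define P where "P = {r. sublin r \<and> (\<forall>x. r x \<le> q x)}"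
  define A where "A = sepi ` P"
  have "\<exists>U\<in>A. \<forall>X\<in>C. X \<subseteq> U" if C: "C \<in> chains A" for C
  proof (cases "C = {}")
    case True
    then show ?thesis using q unfolding A_def P_def by auto
  next
    case False
    define R where "R = {r \<in> P. sepi r \<in> C}"
    have CA: "C \<subseteq> A" using C by (simp add: chains_def)
    then have Rne: "R \<noteq> {}" using False unfolding R_def A_def by auto
    define r0 where "r0 x = Inf ((\<lambda>r. r x) ` R)" for x
    have bdd: "bdd_below ((\<lambda>r. r x) ` R)" for x
    proof (rule bdd_belowI2[where m="- q (-x)"])
      fix r assume "r \<in> R"
      then have "sublin r" "r (-x) \<le> q (-x)" unfolding R_def P_def by auto
      then show "- q (-x) \<le> r x" using sublin_lower[of r x] by simp
    qed
    have r0less: "r0 x < s \<longleftrightarrow> (\<exists>r\<in>R. r x < s)" for x s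
      unfolding r0_def using cInf_less_iff[OF _ bdd[of x], of s] Rne by auto
    have r0le: "r0 x \<le> r x" if "r \<in> R" for r x
      unfolding r0_def using that bdd by (auto intro: cInf_lower)
    have chainR2: "(\<forall>x. r1 x \<le> r2 x) \<or> (\<forall>x. r2 x \<le> r1 x)" if "r1 \<in> R" "r2 \<in> R" for r1 r2
    proof -
      have "sepi r1 \<subseteq> sepi r2 \<or> sepi r2 \<subseteq> sepi r1"
        using C that unfolding R_def chains_def chain_subset_def by auto
      then show ?thesis by (elim disjE) (auto dest: sepi_subset_le)
    qed
    have Rsub: "sublin r" "\<And>x. r x \<le> q x" if "r \<in> R" for r
      using that unfolding R_def P_def by auto
    have "sublin r0"
      unfolding sublin_def
    proof (intro conjI allI impI)
      fix x y
      show "r0 (x + y) \<le> r0 x + r0 y"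
      proof (rule field_le_epsilon)
        fix e :: real assume e: "0 < e"
        obtain r1 where r1: "r1 \<in> R" "r1 x < r0 x + e/2" using r0less[of x "r0 x + e/2"] e by auto
        obtain r2 where r2: "r2 \<in> R" "r2 y < r0 y + e/2" using r0less[of y "r0 y + e/2"] e by auto
        show "r0 (x + y) \<le> r0 x + r0 y + e"
        proof (cases "\<forall>x. r1 x \<le> r2 x")
          case True
          have "r0 (x+y) \<le> r1 (x+y)" using r0le r1 by blast
          also have "\<dots> \<le> r1 x + r1 y" using sublin_add Rsub(1)[OF r1(1)] by blast
          also have "\<dots> \<le> r1 x + r2 y" using True by simp
          finally show ?thesis using r1 r2 by simp
        next
          case False
          then have F: "\<forall>x. r2 x \<le> r1 x" using chainR2[OF r1(1) r2(1)] by blast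
          have "r0 (x+y) \<le> r2 (x+y)" using r0le r2 by blast
          also have "\<dots> \<le> r2 x + r2 y" using sublin_add Rsub(1)[OF r2(1)] by blast
          also have "\<dots> \<le> r1 x + r2 y" using F by simp
          finally show ?thesis using r1 r2 by simp
        qed
      qed
    next
      fix c :: real and x assume c: "0 \<le> c"
      show "r0 (c *\<^sub>R x) = c * r0 x"
      proof (cases "c = 0")
        case True
        have z: "\<And>r. r \<in> R \<Longrightarrow> r 0 = 0" using sublin_0[OF Rsub(1)] by blast
        have "r0 0 < s \<longleftrightarrow> 0 < s" for s
        proof -
          obtain r1 where "r1 \<in> R" using Rne by blast
          show ?thesis unfolding r0less[of 0 s]
          proof
            assume "\<exists>r\<in>R. r 0 < s"
            then obtain r where "r \<in> R" "r 0 < s" by blast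
            then show "0 < s" using z[of r] by simp
          next
            assume "0 < s"
            moreover have "r1 0 = 0" using z \<open>r1 \<in> R\<close> by blast
            ultimately have "r1 0 < s" by simp
            then show "\<exists>r\<in>R. r 0 < s" using \<open>r1 \<in> R\<close> by blast
          qed
        qed
        then show ?thesis using True less_iff_eq by auto
      next
        case False
        then have c: "c > 0" using c by simp
        have "r0 (c *\<^sub>R x) < s \<longleftrightarrow> c * r0 x < s" for s
        proof -
          have "r0 (c *\<^sub>R x) < s \<longleftrightarrow> (\<exists>r\<in>R. c * r x < s)"
            using r0less[of "c *\<^sub>R x" s] sublin_scale[OF Rsub(1)] c by auto
          also have "\<dots> \<longleftrightarrow> (\<exists>r\<in>R. r x < s / c)"
            using c by (simp add: pos_less_divide_eq mult.commute)
          also have "\<dots> \<longleftrightarrow> r0 x < s / c" using r0less by simp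
          also have "\<dots> \<longleftrightarrow> c * r0 x < s" using c by (simp add: pos_less_divide_eq mult.commute)
          finally show ?thesis .
        qed
        then show ?thesis using less_iff_eq by blast
      qed
    qed
    moreover have "\<forall>x. r0 x \<le> q x"
    proof
      fix x obtain r1 where "r1 \<in> R" using Rne by blast
      then show "r0 x \<le> q x" using r0le[of r1 x] Rsub(2)[of r1 x] by linarith
    qed
    ultimately have "r0 \<in> P" unfolding P_def by simp
    moreover have "X \<subseteq> sepi r0" if "X \<in> C" for X
    proof -
      obtain r where "r \<in> P" "X = sepi r" using CA \<open>X \<in> C\<close> unfolding A_def by auto
      then have "r \<in> R" using \<open>X \<in> C\<close> unfolding R_def by auto
      then show ?thesis using \<open>X = sepi r\<close> by (simp add: le_sepi_subset r0le)
    qed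
    ultimately show ?thesis unfolding A_def by blast
  qed
  then obtain M where M: "M \<in> A" "\<forall>X\<in>A. M \<subseteq> X \<longrightarrow> X = M"
    using Zorn_Lemma2[of A] by blast
  then obtain m where m: "m \<in> P" "M = sepi m" unfolding A_def by auto
  have msub: "sublin m" and mq: "\<And>x. m x \<le> q x" using m unfolding P_def by auto
  have neg: "m (-a) = - m a" for a
  proof -
    have "shiftf m a x \<le> q x" for x using shiftf_below[OF msub, of a x] mq[of x] by linarith
    then have "shiftf m a \<in> P" using shiftf_sublin[OF msub] unfolding P_def by blast
    moreover have "sepi m \<subseteq> sepi (shiftf m a)"
      by (rule le_sepi_subset) (rule shiftf_below[OF msub])
    ultimately have "sepi (shiftf m a) = sepi m" using M m unfolding A_def by blast
    then have "shiftf m a = m" using sepi_inj by blast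
    then have "m (-a) \<le> - m a" using shiftf_neg[OF msub, of a] by simp
    moreover have "- m a \<le> m (-a)" using sublin_lower[OF msub, of "-a"] by simp
    ultimately show ?thesis by simp
  qed
  have "linear m"
  proof (rule linearI)
    fix x y
    have "m (x+y) \<le> m x + m y" using sublin_add[OF msub] .
    moreover have "m (-(x+y)) \<le> m (-x) + m (-y)" using sublin_add[OF msub, of "-x" "-y"] by simp
    ultimately show "m (x + y) = m x + m y" using neg[of "x+y"] neg[of x] neg[of y] by (simp add: algebra_simps)
  next
    fix c :: real and x
    show "m (c *\<^sub>R x) = c *\<^sub>R m x"
    proof (cases "c \<ge> 0")
      case True then show ?thesis using sublin_scale[OF msub] by simp
    next
      case False
      have "m (c *\<^sub>R x) = - m ((-c) *\<^sub>R x)" using neg[of "(-c) *\<^sub>R x"] by simp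
      also have "\<dots> = c * m x" using sublin_scale[OF msub, of "-c" x] False by simp
      finally show ?thesis by simp
    qed
  qed
  then show ?thesis using mq by blast
qed

lemma exists_linear_below_at:
  fixes q :: "'a::real_vector \<Rightarrow> real"
  assumes q: "sublin q"
  shows "\<exists>L. linear L \<and> (\<forall>x. L x \<le> q x) \<and> L y0 = q y0"
proof -
  obtain L where L: "linear L" "\<forall>x. L x \<le> shiftf q y0 x"
    using exists_linear_below[OF shiftf_sublin[OF q]] by blast
  have "L x \<le> q x" for x using L(2) shiftf_below[OF q] order_trans by blast
  moreover have "L (-y0) \<le> - q y0" using L(2) shiftf_neg[OF q, of y0] order_trans by blast
  then have "L y0 \<ge> q y0" using linear_neg[OF L(1)] by (metis neg_le_iff_le)
  ultimately show ?thesis using L(1) by (meson order_antisym)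
qed


lemma cont_comp_UNIV: "continuous_on UNIV g \<Longrightarrow> continuous_on UNIV f \<Longrightarrow> continuous_on UNIV (\<lambda>x. g (f x))"
  by (rule continuous_on_compose2[of UNIV g UNIV f]) auto

lemma lc_add_const:
  assumes Z: "lc_tvs TYPE('z::{real_vector,t2_space})"
  shows "continuous_on UNIV (\<lambda>x::'z. x + c)"
proof -
  have g: "continuous_on UNIV (\<lambda>p::'z \<times> 'z. fst p + snd p)" using Z unfolding lc_tvs_def by blast
  have f: "continuous_on UNIV (\<lambda>x::'z. (x, c))" by (intro continuous_on_Pair continuous_on_id continuous_on_const)
  show ?thesis using cont_comp_UNIV[OF g f] by simp
qed

lemma lc_scale_const:
  assumes Z: "lc_tvs TYPE('z::{real_vector,t2_space})"
  shows "continuous_on UNIV (\<lambda>x::'z. c *\<^sub>R x)"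
proof -
  have g: "continuous_on UNIV (\<lambda>p::real \<times> 'z. fst p *\<^sub>R snd p)" using Z unfolding lc_tvs_def by blast
  have f: "continuous_on UNIV (\<lambda>x::'z. (c, x))" by (intro continuous_on_Pair continuous_on_id continuous_on_const)
  show ?thesis using cont_comp_UNIV[OF g f] by simp
qed

lemma lc_scale_vec:
  assumes Z: "lc_tvs TYPE('z::{real_vector,t2_space})"
  shows "continuous_on UNIV (\<lambda>t::real. t *\<^sub>R (y::'z))"
proof -
  have g: "continuous_on UNIV (\<lambda>p::real \<times> 'z. fst p *\<^sub>R snd p)" using Z unfolding lc_tvs_def by blast
  have f: "continuous_on UNIV (\<lambda>t::real. (t, y))" by (intro continuous_on_Pair continuous_on_id continuous_on_const)
  show ?thesis using cont_comp_UNIV[OF g f] by simp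
qed

lemma open_vimage_UNIV: "continuous_on UNIV f \<Longrightarrow> open S \<Longrightarrow> open (f -` S)"
  using continuous_on_open_vimage[OF open_UNIV] by auto

lemma lc_open_translate:
  assumes Z: "lc_tvs TYPE('z::{real_vector,t2_space})" and V: "open (V::'z set)"
  shows "open ((\<lambda>v. v + c) ` V)"
proof -
  have eq: "(\<lambda>v. v + c) ` V = (\<lambda>x. x + (-c)) -` V"
  proof (intro set_eqI iffI)
    fix x assume "x \<in> (\<lambda>v. v + c) ` V"
    then obtain v where "v \<in> V" "x = v + c" by blast
    then show "x \<in> (\<lambda>x. x + (-c)) -` V" by simp
  next
    fix x assume "x \<in> (\<lambda>x. x + (-c)) -` V"
    then have "x + -c \<in> V" by simp
    moreover have "x = (x + -c) + c" by simp
    ultimately show "x \<in> (\<lambda>v. v + c) ` V" by (rule rev_image_eqI)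
  qed
  show ?thesis unfolding eq by (rule open_vimage_UNIV[OF lc_add_const[OF Z] V])
qed

lemma lc_absorb:
  assumes Z: "lc_tvs TYPE('z::{real_vector,t2_space})" and W: "open (W::'z set)" and t0: "t0 *\<^sub>R y \<in> W"
  shows "\<exists>e>0. \<forall>t. \<bar>t - t0\<bar> < e \<longrightarrow> t *\<^sub>R y \<in> W"
proof -
  have "open ((\<lambda>t::real. t *\<^sub>R y) -` W)" using open_vimage_UNIV[OF lc_scale_vec[OF Z] W] .
  moreover have "t0 \<in> (\<lambda>t::real. t *\<^sub>R y) -` W" using t0 by simp
  ultimately obtain e where "e > 0" "ball t0 e \<subseteq> (\<lambda>t::real. t *\<^sub>R y) -` W"
    using open_contains_ball by blast
  moreover have "t *\<^sub>R y \<in> W" if "ball t0 e \<subseteq> (\<lambda>t::real. t *\<^sub>R y) -` W" "\<bar>t - t0\<bar> < e" for t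
  proof -
    have "t \<in> ball t0 e" using that(2) by (simp add: dist_real_def abs_minus_commute)
    then show ?thesis using that(1) by blast
  qed
  ultimately show ?thesis by blast
qed

definition gaugeset :: "'z::real_vector set \<Rightarrow> 'z \<Rightarrow> real set" where
  "gaugeset W x = {t. 0 < t \<and> (1/t) *\<^sub>R x \<in> W}"

definition gaugef :: "'z::real_vector set \<Rightarrow> 'z \<Rightarrow> real" where
  "gaugef W x = Inf (gaugeset W x)"

locale gaugeloc =
  fixes W :: "'z::{real_vector,t2_space} set"
  assumes Z: "lc_tvs TYPE('z)" and Wo: "open W" and Wc: "convex W" and W0: "0 \<in> W"
begin

lemma mono: assumes "t \<in> gaugeset W x" "t \<le> t'" shows "t' \<in> gaugeset W x"
proof -
  have t: "t > 0" "(1/t) *\<^sub>R x \<in> W" using assms unfolding gaugeset_def by auto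
  then have t': "t' > 0" using assms by simp
  have "(t/t') *\<^sub>R ((1/t) *\<^sub>R x) + (1 - t/t') *\<^sub>R 0 \<in> W"
    using convexD[OF Wc t(2) W0, of "t/t'" "1 - t/t'"] t t' assms(2) by simp
  moreover have "(t/t') *\<^sub>R ((1/t) *\<^sub>R x) = (1/t') *\<^sub>R x" using t by simp
  ultimately have "(1/t') *\<^sub>R x \<in> W" by (simp only: scaleR_zero_right add_0_right)
  then show ?thesis using t' unfolding gaugeset_def by simp
qed

lemma nonempty: "gaugeset W x \<noteq> {}"
proof -
  obtain e where e: "e > 0" "\<forall>t. \<bar>t - 0\<bar> < e \<longrightarrow> t *\<^sub>R x \<in> W"
    using lc_absorb[OF Z Wo, of 0 x] W0 by auto
  then have "(e/2) *\<^sub>R x \<in> W" by simp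
  then have "2/e \<in> gaugeset W x" using e unfolding gaugeset_def by simp
  then show ?thesis by blast
qed

lemma bdd: "bdd_below (gaugeset W x)"
  by (rule bdd_belowI[where m=0]) (auto simp: gaugeset_def)

lemma nonneg: "gaugef W x \<ge> 0"
  unfolding gaugef_def using nonempty by (intro cInf_greatest) (auto simp: gaugeset_def)

lemma le: "t \<in> gaugeset W x \<Longrightarrow> gaugef W x \<le> t"
  unfolding gaugef_def using bdd by (rule cInf_lower[rotated])

lemma less: assumes "gaugef W x < r" shows "r \<in> gaugeset W x"
proof -
  obtain t where "t \<in> gaugeset W x" "t < r"
    using assms cInf_less_iff[OF nonempty bdd] unfolding gaugef_def by blast
  then show ?thesis using mono by auto
qed

lemma ge1: "y \<notin> W \<Longrightarrow> gaugef W y \<ge> 1"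
  using less[of y 1] unfolding gaugeset_def by force

lemma lt1: assumes "w \<in> W" shows "gaugef W w < 1"
proof -
  obtain e where e: "e > 0" "\<forall>t. \<bar>t - 1\<bar> < e \<longrightarrow> t *\<^sub>R w \<in> W"
    using lc_absorb[OF Z Wo, of 1 w] assms by auto
  then have "(1 + e/2) *\<^sub>R w \<in> W" by simp
  then have "1/(1 + e/2) \<in> gaugeset W w" using e unfolding gaugeset_def by simp
  then have "gaugef W w \<le> 1/(1 + e/2)" by (rule le)
  also have "\<dots> < 1" using e by (simp add: field_simps)
  finally show ?thesis .
qed


lemma sublin: "sublin (gaugef W)"
  unfolding sublin_def
proof (intro conjI allI impI)
  fix x y
  show "gaugef W (x + y) \<le> gaugef W x + gaugef W y"
  proof (rule field_le_epsilon)
    fix e :: real assume e: "e > 0"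
    define s where "s = gaugef W x + e/2"
    define t where "t = gaugef W y + e/2"
    have s: "s \<in> gaugeset W x" using less e unfolding s_def by simp
    have t: "t \<in> gaugeset W y" using less e unfolding t_def by simp
    have sp: "s > 0" "t > 0" using s t unfolding gaugeset_def by auto
    have "(s/(s+t)) *\<^sub>R ((1/s) *\<^sub>R x) + (t/(s+t)) *\<^sub>R ((1/t) *\<^sub>R y) \<in> W"
      using convexD[OF Wc, of "(1/s) *\<^sub>R x" "(1/t) *\<^sub>R y" "s/(s+t)" "t/(s+t)"] s t sp
      unfolding gaugeset_def by (simp add: add_divide_distrib[symmetric])
    moreover have "(s/(s+t)) *\<^sub>R ((1/s) *\<^sub>R x) + (t/(s+t)) *\<^sub>R ((1/t) *\<^sub>R y) = (1/(s+t)) *\<^sub>R (x + y)"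
      using sp by (simp add: scaleR_add_right)
    ultimately have "s + t \<in> gaugeset W (x+y)" using sp unfolding gaugeset_def by simp
    then have "gaugef W (x+y) \<le> s + t" by (rule le)
    then show "gaugef W (x + y) \<le> gaugef W x + gaugef W y + e" unfolding s_def t_def by simp
  qed
next
  fix c :: real and x assume c: "0 \<le> c"
  show "gaugef W (c *\<^sub>R x) = c * gaugef W x"
  proof (cases "c = 0")
    case True
    have "gaugef W 0 \<le> t" if "t > 0" for t using le[of t 0] that W0 unfolding gaugeset_def by simp
    then have "gaugef W 0 \<le> 0" by (metis field_le_epsilon add_0)
    then show ?thesis using True nonneg[of 0] by simp
  next
    case False
    then have c: "c > 0" using c by simp
    have "gaugef W (c *\<^sub>R x) / c \<le> gaugef W x"
      unfolding gaugef_def[of W x]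
    proof (rule cInf_greatest[OF nonempty])
      fix t assume t: "t \<in> gaugeset W x"
      then have "c * t \<in> gaugeset W (c *\<^sub>R x)" using c unfolding gaugeset_def by simp
      then have "gaugef W (c *\<^sub>R x) \<le> c * t" by (rule le)
      then show "gaugef W (c *\<^sub>R x) / c \<le> t" using c by (simp add: field_simps)
    qed
    moreover have "c * gaugef W x \<le> gaugef W (c *\<^sub>R x)"
      unfolding gaugef_def[of W "c *\<^sub>R x"]
    proof (rule cInf_greatest[OF nonempty])
      fix t assume t: "t \<in> gaugeset W (c *\<^sub>R x)"
      then have "t / c \<in> gaugeset W x" using c unfolding gaugeset_def by simp
      then have "gaugef W x \<le> t / c" by (rule le)
      then show "c * gaugef W x \<le> t" using c by (simp add: field_simps)
    qed
    ultimately show ?thesis using c by (simp add: field_simps)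
  qed
qed

end


lemma lc_cont_linear:
  fixes L :: "'z::{real_vector,t2_space} \<Rightarrow> real"
  assumes Z: "lc_tvs TYPE('z)" and L: "linear L" and W: "open W" "0 \<in> W" and b: "\<And>w. w \<in> W \<Longrightarrow> L w \<le> 1"
  shows "continuous_on UNIV L"
proof -
  have op: "open (L -` S)" if S: "open S" for S :: "real set"
  proof (subst open_subopen, intro ballI)
    fix x assume x: "x \<in> L -` S"
    then obtain e where e: "e > 0" "ball (L x) e \<subseteq> S" using S open_contains_ball by blast
    define N where "N = W \<inter> (\<lambda>v. - v) -` W"
    have No: "open N" unfolding N_def
      using open_vimage_UNIV[OF lc_scale_const[OF Z, of "-1"] W(1)] W(1) by auto
    define T where "T = (\<lambda>y. (2/e) *\<^sub>R (y + (-x))) -` N"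
    have "continuous_on UNIV (\<lambda>y. (2/e) *\<^sub>R (y + (-x)))"
      by (rule cont_comp_UNIV[OF lc_scale_const[OF Z] lc_add_const[OF Z]])
    then have To: "open T" unfolding T_def using No by (rule open_vimage_UNIV)
    have xT: "x \<in> T" unfolding T_def N_def using W(2) by simp
    have "T \<subseteq> L -` S"
    proof
      fix y assume "y \<in> T"
      define v where "v = (2/e) *\<^sub>R (y + (-x))"
      have vN: "v \<in> W" "-v \<in> W" using \<open>y \<in> T\<close> unfolding T_def N_def v_def by auto
      have "L v \<le> 1" "L (-v) \<le> 1" using b vN by auto
      then have "\<bar>L v\<bar> \<le> 1" using linear_neg[OF L, of v] by simp
      have "y = x + (e/2) *\<^sub>R v" unfolding v_def using e by simp
      then have "L y = L x + (e/2) * L v" using linear_add[OF L] linear_scale[OF L] by simp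
      then have "\<bar>L y - L x\<bar> \<le> e/2" using \<open>\<bar>L v\<bar> \<le> 1\<close> e
        by (simp add: abs_mult)
      then have "\<bar>L x - L y\<bar> < e" using e by (simp add: abs_minus_commute)
      then have "L y \<in> ball (L x) e" by (simp add: dist_real_def)
      then show "y \<in> L -` S" using e by auto
    qed
    then show "\<exists>T. open T \<and> x \<in> T \<and> T \<subseteq> L -` S" using To xT by blast
  qed
  show ?thesis unfolding continuous_on_open_vimage[OF open_UNIV] using op by auto
qed

lemma lc_separation:
  fixes A :: "'z::{real_vector,t2_space} set"
  assumes Z: "lc_tvs TYPE('z)" and Acl: "closed A" and Acv: "convex A" and a0: "a0 \<in> A" and p: "p \<notin> A"
  shows "\<exists>L::'z\<Rightarrow>real. linear L \<and> continuous_on UNIV L \<and> (\<forall>a\<in>A. L a < L p)"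
proof -
  define U where "U = (\<lambda>v. p + (-1) *\<^sub>R v) -` (- A)"
  have "continuous_on UNIV (\<lambda>v::'z. p + (-1) *\<^sub>R v)"
    using cont_comp_UNIV[OF lc_add_const[OF Z, of p] lc_scale_const[OF Z, of "-1"]] by (simp add: add.commute)
  then have Uo: "open U" unfolding U_def using Acl by (intro open_vimage_UNIV) auto
  have U0: "0 \<in> U" unfolding U_def using p by simp
  obtain V where V: "open V" "convex V" "0 \<in> V" "V \<subseteq> U"
    using Z Uo U0 unfolding lc_tvs_def by blast
  define W where "W = {a - a0 + v | a v. a \<in> A \<and> v \<in> V}"
  have Wu: "W = (\<Union>a\<in>A. (\<lambda>v. v + (a - a0)) ` V)" unfolding W_def by (auto simp: add.commute)
  have Wo: "open W" unfolding Wu using lc_open_translate[OF Z V(1)] by blast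
  have W0: "0 \<in> W" unfolding W_def using a0 V(3) by force
  have Wc: "convex W" unfolding convex_def
  proof (intro ballI allI impI)
    fix x y and u w :: real assume xy: "x \<in> W" "y \<in> W" and uw: "0 \<le> u" "0 \<le> w" "u + w = 1"
    obtain a1 v1 where 1: "x = a1 - a0 + v1" "a1 \<in> A" "v1 \<in> V" using xy(1) unfolding W_def by blast
    obtain a2 v2 where 2: "y = a2 - a0 + v2" "a2 \<in> A" "v2 \<in> V" using xy(2) unfolding W_def by blast
    have "u *\<^sub>R a1 + w *\<^sub>R a2 \<in> A" using convexD[OF Acv 1(2) 2(2)] uw by blast
    moreover have "u *\<^sub>R v1 + w *\<^sub>R v2 \<in> V" using convexD[OF V(2) 1(3) 2(3)] uw by blast
    moreover have "u *\<^sub>R x + w *\<^sub>R y = (u *\<^sub>R a1 + w *\<^sub>R a2) - a0 + (u *\<^sub>R v1 + w *\<^sub>R v2)"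
      unfolding 1 2 using uw by (simp add: algebra_simps scaleR_add_left[symmetric])
    ultimately show "u *\<^sub>R x + w *\<^sub>R y \<in> W" unfolding W_def by blast
  qed
  have y0: "p - a0 \<notin> W"
  proof
    assume "p - a0 \<in> W"
    then obtain a v where "p - a0 = a - a0 + v" "a \<in> A" "v \<in> V" unfolding W_def by blast
    then have "p + (-1) *\<^sub>R v = a" by (simp add: algebra_simps)
    then show False using \<open>v \<in> V\<close> V(4) \<open>a \<in> A\<close> unfolding U_def by auto
  qed
  interpret g: gaugeloc W using Z Wo Wc W0 by unfold_locales
  obtain L where L: "linear L" "\<forall>x. L x \<le> gaugef W x" "L (p - a0) = gaugef W (p - a0)"
    using exists_linear_below_at[OF g.sublin] by blast
  have Lp: "L (p - a0) \<ge> 1" using L(3) g.ge1[OF y0] by simp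
  have "L w \<le> 1" if "w \<in> W" for w using L(2) g.lt1[OF that] by (meson less_imp_le order_trans)
  then have "continuous_on UNIV L" using lc_cont_linear[OF Z L(1) Wo W0] by blast
  moreover have "L a < L p" if "a \<in> A" for a
  proof -
    have "a - a0 \<in> W" unfolding W_def using that V(3) by force
    then have "L (a - a0) < 1" using L(2) g.lt1 by (meson le_less_trans)
    then show ?thesis using Lp linear_diff[OF L(1)] by simp
  qed
  ultimately show ?thesis using L(1) by (intro exI[of _ L]) auto
qed


lemma lc_convex_closure:
  fixes K :: "'z::{real_vector,t2_space} set"
  assumes Z: "lc_tvs TYPE('z)" and K: "convex K"
  shows "convex (closure K)"
  unfolding convex_def
proof (intro ballI allI impI)
  fix x y and u v :: real assume xy: "x \<in> closure K" "y \<in> closure K" and uv: "0 \<le> u" "0 \<le> v" "u + v = 1"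
  define g where "g = (\<lambda>p::'z \<times> 'z. u *\<^sub>R fst p + v *\<^sub>R snd p)"
  have ga: "continuous_on UNIV (\<lambda>p::'z \<times> 'z. fst p + snd p)" using Z unfolding lc_tvs_def by blast
  have "continuous_on UNIV (\<lambda>p::'z \<times> 'z. u *\<^sub>R fst p)"
    by (rule cont_comp_UNIV[OF lc_scale_const[OF Z]]) (rule continuous_on_fst[OF continuous_on_id])
  moreover have "continuous_on UNIV (\<lambda>p::'z \<times> 'z. v *\<^sub>R snd p)"
    by (rule cont_comp_UNIV[OF lc_scale_const[OF Z]]) (rule continuous_on_snd[OF continuous_on_id])
  ultimately have "continuous_on UNIV (\<lambda>p::'z \<times> 'z. (u *\<^sub>R fst p, v *\<^sub>R snd p))"
    by (rule continuous_on_Pair)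
  from cont_comp_UNIV[OF ga this] have gc: "continuous_on UNIV g" unfolding g_def by simp
  have "g p \<in> closure K" if p: "p \<in> K \<times> K" for p
  proof -
    have "fst p \<in> K" "snd p \<in> K" using p by auto
    then have "g p \<in> K" unfolding g_def using convexD[OF K] uv by blast
    then show ?thesis using closure_subset by blast
  qed
  then have "g ` (K \<times> K) \<subseteq> closure K" by blast
  then have "g ` closure (K \<times> K) \<subseteq> closure K"
    by (intro image_closure_subset continuous_on_subset[OF gc]) auto
  moreover have "(x, y) \<in> closure (K \<times> K)" using xy unfolding closure_Times by blast
  ultimately have "g (x, y) \<in> closure K" by blast
  then show "u *\<^sub>R x + v *\<^sub>R y \<in> closure K" unfolding g_def by simp
qed

lemma GG_props:
  fixes A :: "'z::{real_vector,t2_space} set"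
  assumes Z: "lc_tvs TYPE('z)" and A: "A \<in> GG C"
  shows "closed A" "convex A" "msum A C \<subseteq> A"
proof -
  have eq: "A = closure (convex hull (msum A C))" using A unfolding GG_def by simp
  show "closed A" by (subst eq) simp
  show "convex A" by (subst eq) (rule lc_convex_closure[OF Z convex_convex_hull])
  have "msum A C \<subseteq> closure (convex hull (msum A C))"
    using hull_subset[of "msum A C" convex] closure_subset[of "convex hull msum A C"] by (rule order_trans)
  then show "msum A C \<subseteq> A" using eq by simp
qed

lemma Inf_range_ereal: "Inf (range ereal) = -\<infinity>"
  by (rule ereal_bot) (rule Inf_lower, rule rangeI)

lemma part2_pt:
  assumes zs: "linear zs" and fin: "phi zs (f x) \<noteq> -\<infinity>" and neg: "phi zs (sdir f x u) < 0"
  shows "\<not> sdir f x u \<subseteq> recc (f x)"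
proof
  assume sub: "sdir f x u \<subseteq> recc (f x)"
  obtain w where w: "w \<in> sdir f x u" "ereal (- zs w) < 0"
    using neg unfolding phi_def Inf_less_iff by blast
  have wr: "w \<in> recc (f x)" using w sub by blast
  then have ne: "f x \<noteq> {}" unfolding recc_def by auto
  then have ms: "msum (f x) {w} \<subseteq> f x" using wr unfolding recc_def by auto
  obtain a where a: "a \<in> f x" using ne by blast
  have an: "a + real n *\<^sub>R w \<in> f x" for n
  proof (induction n)
    case 0 then show ?case using a by simp
  next
    case (Suc n)
    have "(a + real n *\<^sub>R w) + w \<in> msum (f x) {w}" using Suc unfolding msum_def by blast
    moreover have "(a + real n *\<^sub>R w) + w = a + real (Suc n) *\<^sub>R w" by (simp add: algebra_simps)
    ultimately show ?case using ms by (metis subsetD)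
  qed
  have le: "phi zs (f x) \<le> ereal (- zs a - real n * zs w)" for n
  proof -
    have "phi zs (f x) \<le> ereal (- zs (a + real n *\<^sub>R w))"
      unfolding phi_def by (rule Inf_lower) (rule rev_image_eqI[OF an[of n]], rule refl)
    then show ?thesis using linear_add[OF zs] linear_scale[OF zs] by simp
  qed
  obtain m where m: "phi zs (f x) = ereal m"
    using fin le[of 0] by (cases "phi zs (f x)") auto
  have wpos: "zs w > 0" using w(2) by simp
  obtain n where "- zs a - m < real n * zs w" using reals_Archimedean3[OF wpos] by blast
  then show False using le[of n] m by simp
qed


lemma phidir_empty:
  assumes "f x = {}"
  shows "phidir f zs x u = -\<infinity>"
proof -
  have ph: "phi zs (f x) = \<infinity>" using assms unfolding phi_def by (simp add: top_ereal_def)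
  have em: "eminus r \<infinity> = -\<infinity>" for r
  proof -
    have "{t::real. r \<le> infadd \<infinity> (ereal t)} = UNIV" unfolding infadd_def by simp
    then show ?thesis unfolding eminus_def using Inf_range_ereal by simp
  qed
  have "phidir f zs x u \<le> ereal (1/1) * eminus (phi zs (f (x + 1 *\<^sub>R u))) (phi zs (f x))"
    unfolding phidir_def by (rule INF_lower) simp
  also have "\<dots> = -\<infinity>" using ph em by simp
  finally show ?thesis by simp
qed

lemma part1_pt:
  fixes f :: "'x::real_vector \<Rightarrow> 'z::{real_vector,t2_space} set"
  assumes Z: "lc_tvs TYPE('z)" and Ccone: "cone C"
    and Cneg: "negdual C - {\<lambda>z. 0} \<noteq> {}"
    and fcv: "setconvex C f"
    and ns: "\<not> sdir f x u \<subseteq> recc (f x)"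
  shows "\<exists>zs\<in>negdual C - {\<lambda>z. 0}. phi zs (f x) \<noteq> -\<infinity> \<and> phidir f zs x u < 0"
proof (cases "f x = {}")
  case True
  obtain zs where "zs \<in> negdual C - {\<lambda>z. 0}" using Cneg by blast
  moreover have "phi zs (f x) = \<infinity>" using True unfolding phi_def by (simp add: top_ereal_def)
  ultimately show ?thesis using phidir_empty[of f x, OF True] by (intro bexI[of _ zs]) auto
next
  case False
  define A where "A = f x"
  have AG: "A \<in> GG C" using fcv unfolding setconvex_def A_def by blast
  note Ap = GG_props[OF Z AG]
  obtain z where z: "z \<in> sdir f x u" "z \<notin> recc A" using ns unfolding A_def by blast
  then obtain a where a: "a \<in> A" "a + z \<notin> A"
    using False unfolding recc_def A_def msum_def by auto
  obtain L :: "'z \<Rightarrow> real" where L: "linear L" "continuous_on UNIV L" "\<forall>b\<in>A. L b < L (a + z)"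
    using lc_separation[OF Z Ap(1) Ap(2) a(1) a(2)] by blast
  have Lz: "L z > 0" using L(3) a(1) linear_add[OF L(1)] by fastforce
  have LC: "L c \<le> 0" if c: "c \<in> C" for c
  proof (rule ccontr)
    assume "\<not> L c \<le> 0"
    then have cp: "L c > 0" by simp
    define s where "s = L z / L c + 1"
    have s: "s \<ge> 0" using Lz cp unfolding s_def by simp
    then have "s *\<^sub>R c \<in> C" using Ccone c unfolding cone_def by blast
    then have "a + s *\<^sub>R c \<in> A" using Ap(3) a(1) unfolding msum_def by blast
    then have "L (a + s *\<^sub>R c) < L (a + z)" using L(3) by blast
    then have "s * L c < L z" using linear_add[OF L(1)] linear_scale[OF L(1)] by simp
    moreover have "s * L c = L z + L c" using cp unfolding s_def by (simp add: field_simps)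
    ultimately show False using cp by simp
  qed
  have Lneg: "L \<in> negdual C - {\<lambda>z. 0}"
    unfolding negdual_def topdual_def using L(1,2) LC Lz by auto
  have philow: "ereal (- L (a + z)) \<le> phi L A"
    unfolding phi_def using L(3) by (auto intro!: Inf_greatest)
  have phiup: "phi L A \<le> ereal (- L a)" unfolding phi_def using a(1) by (auto intro: Inf_lower)
  obtain m where m: "phi L A = ereal m" using philow phiup by (cases "phi L A") auto
  define P where "P = phidir f L x u"
  define R where "R = {r::real. P \<le> ereal (- r)}"
  have Rcl: "closed R" and Rcv: "convex R"
  proof -
    have "closed R \<and> convex R"
    proof (cases P)
      case (real p)
      then have "R = {..-p}" unfolding R_def by auto
      then show ?thesis by simp
    next
      case PInf
      then have "R = {}" unfolding R_def by auto
      then show ?thesis by simp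
    next
      case MInf
      then have "R = UNIV" unfolding R_def by auto
      then show ?thesis by simp
    qed
    then show "closed R" "convex R" by auto
  qed
  define K where "K = L -` R"
  have Kcl: "closed K" unfolding K_def using continuous_on_closed_vimage[OF closed_UNIV] L(2) Rcl by auto
  have Kcv: "convex K" unfolding K_def by (rule convex_linear_vimage[OF L(1) Rcv])
  define U1 where "U1 = (\<Union>t\<in>{t. 0 < t \<and> t < 1}. sscale (1 / t) (ominus (f (x + t *\<^sub>R u)) (f x)))"
  have "U1 \<subseteq> K"
  proof
    fix w assume "w \<in> U1"
    then obtain t y where t: "0 < t" "t < 1" and wy: "w = (1/t) *\<^sub>R y" and y: "msum A {y} \<subseteq> f (x + t *\<^sub>R u)"
      unfolding U1_def sscale_def ominus_def A_def by auto
    have ph1: "phi L (f (x + t *\<^sub>R u)) \<le> ereal (m - L y)"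
    proof (rule ereal_le_epsilon2)
      fix e :: real assume e: "0 < e"
      have "phi L A < ereal (m + e)" using m e by simp
      then obtain b where b: "b \<in> A" "ereal (- L b) < ereal (m + e)"
        unfolding phi_def by (auto simp: Inf_less_iff)
      have "b + y \<in> f (x + t *\<^sub>R u)" using y b(1) unfolding msum_def by blast
      then have "phi L (f (x + t *\<^sub>R u)) \<le> ereal (- L (b + y))"
        unfolding phi_def by (auto intro: Inf_lower)
      also have "\<dots> \<le> ereal (m - L y) + ereal e" using b(2) linear_add[OF L(1)] by simp
      finally show "phi L (f (x + t *\<^sub>R u)) \<le> ereal (m - L y) + ereal e" .
    qed
    have em: "eminus (phi L (f (x + t *\<^sub>R u))) (phi L (f x)) \<le> ereal (- L y)"
    proof -
      have "phi L (f (x + t *\<^sub>R u)) \<le> infadd (phi L (f x)) (ereal (- L y))"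
        using ph1 m unfolding A_def infadd_def by simp
      then show ?thesis unfolding eminus_def by (auto intro: Inf_lower)
    qed
    have "P \<le> ereal (1/t) * eminus (phi L (f (x + t *\<^sub>R u))) (phi L (f x))"
      unfolding P_def phidir_def using t by (intro INF_lower) simp
    also have "\<dots> \<le> ereal (1/t) * ereal (- L y)"
      using em t by (intro ereal_mult_left_mono) auto
    also have "\<dots> = ereal (- L w)" unfolding wy using linear_scale[OF L(1)] by simp
    finally show "w \<in> K" unfolding K_def R_def by simp
  qed
  then have "convex hull U1 \<subseteq> K" using Kcv by (intro hull_minimal) auto
  then have "closure (convex hull U1) \<subseteq> K" using Kcl by (rule closure_minimal)
  moreover have "z \<in> closure (convex hull U1)" using z(1) unfolding sdir_def U1_def by auto
  ultimately have "P \<le> ereal (- L z)" unfolding K_def R_def by auto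
  also have "\<dots> < 0" using Lz by simp
  finally have "P < 0" .
  moreover have "phi L (f x) \<noteq> -\<infinity>" using m unfolding A_def by simp
  ultimately show ?thesis using Lneg unfolding P_def by blast
qed


theorem mainTheorem13:
  fixes f :: "'x::real_vector \<Rightarrow> 'z::{real_vector,t2_space} set"
    and C :: "'z set" and x0 :: 'x
  assumes Z: "lc_tvs TYPE('z)"
    and Ccl: "closed C" and Ccv: "convex C" and Ccone: "cone C" and C0: "0 \<in> C"
    and Cneg: "negdual C - {\<lambda>z. 0} \<noteq> {}"
    and fcv: "setconvex C f"
    and x0: "x0 \<in> sdom f"
  shows "((\<forall>x. f x \<noteq> f x0 \<longrightarrow> \<not> (sdir f x (x0 - x) \<subseteq> recc (f x))) \<longrightarrow>
          (\<forall>x. f x \<noteq> f x0 \<longrightarrow> (\<exists>zs\<in>negdual C - {\<lambda>z. 0}.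
               phi zs (f x) \<noteq> -\<infinity> \<and> phidir f zs x (x0 - x) < 0)))
       \<and> ((\<forall>zs\<in>negdual C - {\<lambda>z. 0}. \<forall>x u. phi zs (sdir f x u) = phidir f zs x u) \<longrightarrow>
          ((\<forall>x. f x \<noteq> f x0 \<longrightarrow> \<not> (sdir f x (x0 - x) \<subseteq> recc (f x))) \<longleftrightarrow>
           (\<forall>x. f x \<noteq> f x0 \<longrightarrow> (\<exists>zs\<in>negdual C - {\<lambda>z. 0}.
               phi zs (f x) \<noteq> -\<infinity> \<and> phidir f zs x (x0 - x) < 0))))"
proof -
  have P1: "\<exists>zs\<in>negdual C - {\<lambda>z. 0}. phi zs (f x) \<noteq> -\<infinity> \<and> phidir f zs x u < 0"
    if "\<not> sdir f x u \<subseteq> recc (f x)" for x u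
    by (rule part1_pt[OF Z Ccone Cneg fcv that])
  have P2: "\<not> sdir f x u \<subseteq> recc (f x)"
    if reg: "\<forall>zs\<in>negdual C - {\<lambda>z. 0}. \<forall>x u. phi zs (sdir f x u) = phidir f zs x u"
      and ex: "\<exists>zs\<in>negdual C - {\<lambda>z. 0}. phi zs (f x) \<noteq> -\<infinity> \<and> phidir f zs x u < 0" for x u
  proof -
    obtain zs where zs: "zs \<in> negdual C - {\<lambda>z. 0}" "phi zs (f x) \<noteq> -\<infinity>" "phidir f zs x u < 0"
      using ex by blast
    have "linear zs" using zs(1) unfolding negdual_def topdual_def by blast
    moreover have "phi zs (sdir f x u) < 0" using reg zs(1) zs(3) by simp
    ultimately show ?thesis using part2_pt zs(2) by blast
  qed
  show ?thesis
  proof (intro conjI impI)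
    assume "\<forall>x. f x \<noteq> f x0 \<longrightarrow> \<not> sdir f x (x0 - x) \<subseteq> recc (f x)"
    then show "\<forall>x. f x \<noteq> f x0 \<longrightarrow> (\<exists>zs\<in>negdual C - {\<lambda>z. 0}. phi zs (f x) \<noteq> -\<infinity> \<and> phidir f zs x (x0 - x) < 0)"
      using P1 by blast
  next
    assume reg: "\<forall>zs\<in>negdual C - {\<lambda>z. 0}. \<forall>x u. phi zs (sdir f x u) = phidir f zs x u"
    show "(\<forall>x. f x \<noteq> f x0 \<longrightarrow> \<not> sdir f x (x0 - x) \<subseteq> recc (f x)) \<longleftrightarrow>
          (\<forall>x. f x \<noteq> f x0 \<longrightarrow> (\<exists>zs\<in>negdual C - {\<lambda>z. 0}. phi zs (f x) \<noteq> -\<infinity> \<and> phidir f zs x (x0 - x) < 0))"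
      using P1 P2[OF reg] by blast
  qed
qed

end
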